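(* Let $\mathcal{X}\subseteq\mathcal{B}(0,R)$ be compact convex, let $\mathcal{Z}$ be a set and $f:\mathcal{X}\times\mathcal{Z}\to\mathbb{R}$ with $f(\cdot,z)\in\mathcal{F}^0_{\mathcal{X}}(L)$ for every $z$. Consider full-batch gradient descent: given $S=(z_1,\dots,z_n)\in\mathcal{Z}^n$, a number of iterations $T$ and step sizes $(\eta_t)_{t\in[T]}$, start from an initial point $x^1\in\mathcal{X}$ (the same for all datasets), set $x^{t+1}=\mathsf{Proj}_{\mathcal{X}}(x^t-\eta_t\nabla F_S(x^t))$ for $t=1,\dots,T-1$, and output $\mathcal{A}_{\sf GD}(S)=\bar x^T=\frac{1}{\sum_{t\in[T]}\eta_t}\sum_{t\in[T]}\eta_t x^t$. Then $$\sup_{S\simeq S'}\|\mathcal{A}_{\sf GD}(S)-\mathcal{A}_{\sf GD}(S')\|\le\min\Big\{2R,\;4L\Big(\frac1n\sum_{t=1}^{T-1}\eta_t+\sqrt{\sum_{t=1}^{T-1}\eta_t^2}\Big)\Big\}.$$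
   Context: $\|\cdot\|$ is the Euclidean norm on $\mathbb{R}^d$, $\mathcal{B}(0,R)$ the Euclidean ball of radius $R$, $\mathsf{Proj}_{\mathcal{X}}$ the Euclidean projection. $\mathcal{F}^0_{\mathcal{X}}(L)$ is the class of convex $L$-Lipschitz functions on $\mathcal{X}$ (Lipschitz on an open set containing $\mathcal{X}$, so subgradients have norm at most $L$). $\nabla f(x,z)$ is a fixed arbitrary selection of a subgradient of $f(\cdot,z)$ at $x$, and $\nabla F_S(x)=\frac1n\sum_{i=1}^n\nabla f(x,z_i)$ where $F_S(x)=\frac1n\sum_i f(x,z_i)$. Datasets $S,S'\in\mathcal{Z}^n$ are neighboring, $S\simeq S'$, if they differ in at most one entry. *)

theory Defs
  imports "HOL-Analysis.Analysis"
begin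

definition is_subgradient :: "'a::real_inner set \<Rightarrow> ('a \<Rightarrow> real) \<Rightarrow> 'a \<Rightarrow> 'a \<Rightarrow> bool" where
  "is_subgradient X h x v \<longleftrightarrow> (\<forall>y\<in>X. h y \<ge> h x + inner v (y - x))"

definition emp_grad :: "('a::real_vector \<Rightarrow> 'z \<Rightarrow> 'a) \<Rightarrow> 'z list \<Rightarrow> 'a \<Rightarrow> 'a" where
  "emp_grad g S x = (1 / real (length S)) *\<^sub>R (\<Sum>i<length S. g x (S ! i))"

text \<open>gd_seq ... k is the iterate x^(k+1): x^1 = x1,
  x^(t+1) = Proj_X (x^t - eta_t * grad F_S(x^t)).\<close>
primrec gd_seq :: "'a::euclidean_space set \<Rightarrow> ('a \<Rightarrow> 'z \<Rightarrow> 'a) \<Rightarrow> 'z list \<Rightarrow> (nat \<Rightarrow> real) \<Rightarrow> 'a \<Rightarrow> nat \<Rightarrow> 'a" where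
  "gd_seq X g S \<eta> x1 0 = x1"
| "gd_seq X g S \<eta> x1 (Suc k) =
     closest_point X (gd_seq X g S \<eta> x1 k - \<eta> (Suc k) *\<^sub>R emp_grad g S (gd_seq X g S \<eta> x1 k))"

definition A_GD :: "'a::euclidean_space set \<Rightarrow> ('a \<Rightarrow> 'z \<Rightarrow> 'a) \<Rightarrow> (nat \<Rightarrow> real) \<Rightarrow> 'a \<Rightarrow> nat \<Rightarrow> 'z list \<Rightarrow> 'a" where
  "A_GD X g \<eta> x1 T S =
     (1 / (\<Sum>t=1..T. \<eta> t)) *\<^sub>R (\<Sum>t=1..T. \<eta> t *\<^sub>R gd_seq X g S \<eta> x1 (t - 1))"

definition neighboring :: "'z list \<Rightarrow> 'z list \<Rightarrow> bool" where
  "neighboring S S' \<longleftrightarrow> length S = length S' \<and> card {i. i < length S \<and> S ! i \<noteq> S' ! i} \<le> 1"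

end

theory Submission
  imports Defs
begin

lemma alg_step:
  fixes d d' b e B Q L :: real
  assumes "0 \<le> d" "0 \<le> b" "0 \<le> e" "0 \<le> B" "0 \<le> Q" "0 \<le> L" "0 \<le> d'"
    and "d \<le> B + 2  *  L  *  sqrt Q"
    and "d' ^ 2 \<le> d ^ 2 + b  *  e  *  d + 4  *  L ^ 2  *  e ^ 2"
  shows "d' \<le> B + b  *  e + 2  *  L  *  sqrt (Q + e ^ 2)"
proof -
  define s where "s = sqrt Q"
  define s' where "s' = sqrt (Q + e ^ 2)"
  have s0: "0 \<le> s" unfolding s_def using assms(5) by simp
  have ss: "s \<le> s'" unfolding s_def s'_def by (simp add: real_sqrt_le_mono)
  have s2: "s' ^ 2 = s ^ 2 + e ^ 2" unfolding s_def s'_def using assms(5) by (simp add: real_sqrt_pow2)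
  have h1: "d ^ 2 \<le> (B + 2 * L * s) ^ 2" using assms(1,8) s_def by (simp add: power_mono)
  have h2: "b * e * d \<le> b * e * (B + 2 * L * s)" using assms s_def by (simp add: mult_left_mono)
  have ex: "(B + b * e + 2 * L * s') ^ 2 = B ^ 2 + b ^ 2 * e ^ 2 + 4 * L ^ 2 * s' ^ 2 + 2 * B * b * e + 4 * B * L * s' + 4 * b * e * L * s'"
    unfolding power2_eq_square by algebra
  have ex2: "(B + 2 * L * s) ^ 2 = B ^ 2 + 4 * L ^ 2 * s ^ 2 + 4 * B * L * s"
    unfolding power2_eq_square by algebra
  have ex3: "4 * L ^ 2 * s' ^ 2 = 4 * L ^ 2 * s ^ 2 + 4 * L ^ 2 * e ^ 2" using s2 by (simp add: distrib_left)
  have "(B + b * e + 2 * L * s') ^ 2 = (B + 2 * L * s) ^ 2 + b * e * (B + 2 * L * s) + 4 * L ^ 2 * e ^ 2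
        + (b ^ 2 * e ^ 2 + B * b * e + 4 * B * L * (s' - s) + 4 * b * e * L * s' - 2 * b * e * L * s)"
    unfolding ex ex2 using ex3 by (simp add: right_diff_distrib distrib_left)
  moreover have "0 \<le> b ^ 2 * e ^ 2 + B * b * e + 4 * B * L * (s'-s) + (4 * b * e * L * s' - 2 * b * e * L * s)"
  proof -
    have "0 \<le> 4 * B * L * (s' - s)" using assms ss by simp
    moreover have "2 * b * e * L * s \<le> 4 * b * e * L * s'"
    proof -
      have "b * e * L * s \<le> b * e * L * s'" using assms ss by (simp add: mult_left_mono)
      moreover have "0 \<le> b * e * L * s" using assms s0 by simp
      ultimately show ?thesis by linarith
    qed
    moreover have "0 \<le> B * b * e" using assms by simp
    moreover have "0 \<le> b ^ 2 * e ^ 2" by simp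
    ultimately show ?thesis by linarith
  qed
  ultimately have "d' ^ 2 \<le> (B + b * e + 2 * L * s') ^ 2" using assms(9) h1 h2 by linarith
  moreover have "0 \<le> B + b * e + 2 * L * s'" using assms ss s0 by simp
  ultimately show ?thesis unfolding s'_def using power2_le_imp_le by blast
qed

lemma gd_in: "closed X \<Longrightarrow> x1 \<in> X \<Longrightarrow> gd_seq X g S \<eta> x1 k \<in> X"
  by (induction k) (auto intro: closest_point_in_set)

lemma emp_grad_norm:
  assumes "length S \<ge> 1" "\<And>j. j < length S \<Longrightarrow> norm (g x (S ! j)) \<le> L"
  shows "norm (emp_grad g S x) \<le> L"
proof -
  have "norm (\<Sum>i<length S. g x (S ! i)) \<le> (\<Sum>i<length S. norm (g x (S ! i)))"
    by (rule norm_sum)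
  also have "\<dots> \<le> (\<Sum>i<length S. L)" by (rule sum_mono) (use assms in auto)
  also have "\<dots> = real (length S) * L" by simp
  finally have "norm (\<Sum>i<length S. g x (S ! i)) \<le> real (length S) * L" .
  moreover have "0 < real (length S)" using assms(1) by (simp add: Suc_le_eq)
  ultimately show ?thesis unfolding emp_grad_def
    by (simp add: pos_divide_le_eq mult.commute)
qed

lemma avg_bound:
  fixes v :: "nat \<Rightarrow> 'a::real_normed_vector"
  assumes "0 < (\<Sum>t=1..T. \<eta> t)" "\<And>t. t \<in> {1..T} \<Longrightarrow> 0 \<le> \<eta> t"
    and "\<And>t. t \<in> {1..T} \<Longrightarrow> norm (v t) \<le> K"
  shows "norm ((1 / (\<Sum>t=1..T. \<eta> t)) *\<^sub>R (\<Sum>t=1..T. \<eta> t *\<^sub>R v t)) \<le> K"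
proof -
  define W where "W = (\<Sum>t=1..T. \<eta> t)"
  have "norm (\<Sum>t=1..T. \<eta> t *\<^sub>R v t) \<le> (\<Sum>t=1..T. norm (\<eta> t *\<^sub>R v t))" by (rule norm_sum)
  also have "\<dots> \<le> (\<Sum>t=1..T. \<eta> t * K)"
    by (rule sum_mono) (use assms(2,3) in \<open>auto intro: mult_left_mono\<close>)
  also have "\<dots> = W * K" unfolding W_def by (simp add: sum_distrib_right)
  finally have "norm (\<Sum>t=1..T. \<eta> t *\<^sub>R v t) \<le> W * K" .
  moreover have "0 < W" using assms(1) W_def by simp
  ultimately show ?thesis unfolding W_def[symmetric]
    by (simp add: field_simps)
qed

lemma mono_sub:
  assumes "is_subgradient X h x u" "is_subgradient X h y v" "x \<in> X" "y \<in> X"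
  shows "0 \<le> inner (x - y) (u - v)"
proof -
  have "h y \<ge> h x + inner u (y - x)" using assms(1,4) unfolding is_subgradient_def by blast
  moreover have "h x \<ge> h y + inner v (x - y)" using assms(2,3) unfolding is_subgradient_def by blast
  ultimately have "inner u (y - x) + inner v (x - y) \<le> 0" by linarith
  then show ?thesis by (simp add: inner_diff_left inner_diff_right inner_commute)
qed

lemma inner_bound:
  fixes g :: "'a::real_inner \<Rightarrow> 'z \<Rightarrow> 'a"
  assumes sub: "\<And>x z. x \<in> X \<Longrightarrow> z \<in> Z \<Longrightarrow> is_subgradient X (\<lambda>y. f y z) x (g x z)"
    and gn: "\<And>x z. x \<in> X \<Longrightarrow> z \<in> Z \<Longrightarrow> norm (g x z) \<le> L"
    and L0: "0 \<le> L"
    and xy: "x \<in> X" "y \<in> X"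
    and SS: "S \<in> lists Z" "S' \<in> lists Z" "length S = n" "length S' = n" "neighboring S S'" "n \<ge> 1"
  shows "- (2 * L / real n) * norm (x - y) \<le> inner (x - y) (emp_grad g S x - emp_grad g S' y)"
proof -
  define D where "D = {i. i < length S \<and> S ! i \<noteq> S' ! i}"
  have cD: "card D \<le> 1" using SS(5) unfolding neighboring_def D_def by blast
  have Dsub: "D \<subseteq> {..<n}" using SS(3) unfolding D_def by auto
  define h where "h j = inner (x - y) (g x (S ! j) - g y (S' ! j))" for j
  define c where "c = 2 * L * norm (x - y)"
  have hb: "(if j \<in> D then - c else 0) \<le> h j" if "j < n" for j
  proof (cases "j \<in> D")
    case True
    have z: "S ! j \<in> Z" "S' ! j \<in> Z" using SS that by (auto simp: lists_def in_listsp_conv_set)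
    have "norm (g x (S ! j) - g y (S' ! j)) \<le> norm (g x (S ! j)) + norm (g y (S' ! j))"
      by (rule norm_triangle_ineq4)
    also have "\<dots> \<le> 2 * L" using gn[OF xy(1) z(1)] gn[OF xy(2) z(2)] by linarith
    finally have "norm (g x (S ! j) - g y (S' ! j)) \<le> 2 * L" .
    then have "norm (x - y) * norm (g x (S ! j) - g y (S' ! j)) \<le> norm (x - y) * (2 * L)"
      by (simp add: mult_left_mono)
    moreover have "\<bar>h j\<bar> \<le> norm (x - y) * norm (g x (S ! j) - g y (S' ! j))"
      unfolding h_def by (rule Cauchy_Schwarz_ineq2)
    ultimately show ?thesis using True unfolding c_def by (simp add: mult.commute)
  next
    case False
    then have e: "S ! j = S' ! j" using that SS(3) unfolding D_def by auto
    have z: "S ! j \<in> Z" using SS that by (auto simp: lists_def in_listsp_conv_set)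
    show ?thesis using False mono_sub[OF sub[OF xy(1) z] sub[OF xy(2) z] xy] unfolding h_def e
      by (simp add: e)
  qed
  have "(\<Sum>j<n. (if j \<in> D then - c else 0)) \<le> (\<Sum>j<n. h j)"
    by (rule sum_mono) (use hb in auto)
  moreover have "(\<Sum>j<n. (if j \<in> D then - c else 0)) = - real (card D) * c"
  proof -
    have "(\<Sum>j<n. (if j \<in> D then - c else 0)) = (\<Sum>j\<in>{..<n} \<inter> D. - c)"
      by (simp add: sum.If_cases)
    also have "{..<n} \<inter> D = D" using Dsub by blast
    finally show ?thesis by simp
  qed
  moreover have "real (card D) * c \<le> c" using cD unfolding c_def
    using L0 by (simp add: mult_left_le_one_le)
  ultimately have "- c \<le> (\<Sum>j<n. h j)" by linarith
  moreover have "inner (x - y) (emp_grad g S x - emp_grad g S' y) = (1 / real n) * (\<Sum>j<n. h j)"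
    unfolding emp_grad_def h_def SS(3) SS(4)
    by (simp add: inner_diff_right inner_sum_right sum_subtractf diff_divide_distrib)
  moreover have "0 < real n" using SS(6) by simp
  ultimately show ?thesis unfolding c_def
    by (simp add: field_simps)
qed

lemma norm_diff_sq: "norm (a - b) ^ 2 = norm a ^ 2 - 2 * inner a b + norm (b::'a::real_inner) ^ 2"
  by (simp add: power2_norm_eq_inner inner_diff_left inner_diff_right inner_commute)

theorem theorem3p2:
  fixes X :: "'a::euclidean_space set" and Z :: "'z set"
    and f :: "'a \<Rightarrow> 'z \<Rightarrow> real" and g :: "'a \<Rightarrow> 'z \<Rightarrow> 'a"
    and R L :: real and \<eta> :: "nat \<Rightarrow> real" and x1 :: 'a and n T :: nat
  assumes "compact X" and "convex X" and "X \<subseteq> cball 0 R"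
    and "x1 \<in> X"
    and "\<And>z. z \<in> Z \<Longrightarrow> convex_on X (\<lambda>x. f x z)"
    and "\<And>z. z \<in> Z \<Longrightarrow> \<exists>U. open U \<and> X \<subseteq> U \<and> L-lipschitz_on U (\<lambda>x. f x z)"
    and "\<And>x z. x \<in> X \<Longrightarrow> z \<in> Z \<Longrightarrow> is_subgradient X (\<lambda>y. f y z) x (g x z)"
    and "\<And>x z. x \<in> X \<Longrightarrow> z \<in> Z \<Longrightarrow> norm (g x z) \<le> L"
    and "n \<ge> 1" and "T \<ge> 1"
    and "\<And>t. t \<in> {1..T} \<Longrightarrow> \<eta> t > 0"
  shows "\<forall>S S'. S \<in> lists Z \<and> S' \<in> lists Z \<and> length S = n \<and> length S' = n \<and> neighboring S S' \<longrightarrow>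
           norm (A_GD X g \<eta> x1 T S - A_GD X g \<eta> x1 T S')
             \<le> min (2 * R) (4 * L * ((1 / real n) * (\<Sum>t=1..T-1. \<eta> t) + sqrt (\<Sum>t=1..T-1. (\<eta> t)\<^sup>2)))"
proof (intro allI impI)
  fix S S' assume H: "S \<in> lists Z \<and> S' \<in> lists Z \<and> length S = n \<and> length S' = n \<and> neighboring S S'"
  then have SS: "S \<in> lists Z" "S' \<in> lists Z" "length S = n" "length S' = n" "neighboring S S'" by auto
  have clX: "closed X" using assms(1) by (rule compact_imp_closed)
  have XnE: "X \<noteq> {}" using assms(4) by auto
  have setS: "set S \<subseteq> Z" "set S' \<subseteq> Z" using SS(1,2) by (auto simp: in_lists_conv_set)
  have S0: "S ! 0 \<in> Z" 
  proof -
    have "0 < length S" using SS(3) assms(9) by simp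
    then have "S ! 0 \<in> set S" by (rule nth_mem)
    then show ?thesis using setS(1) by blast
  qed
  have L0: "0 \<le> L" using assms(8)[OF assms(4) S0] norm_ge_zero[of "g x1 (S ! 0)"] by linarith
  define x where "x k = gd_seq X g S \<eta> x1 k" for k
  define y where "y k = gd_seq X g S' \<eta> x1 k" for k
  have xX: "x k \<in> X" for k unfolding x_def by (rule gd_in[OF clX assms(4)])
  have yX: "y k \<in> X" for k unfolding y_def by (rule gd_in[OF clX assms(4)])
  define P where "P k = (\<Sum>s=1..k. \<eta> s)" for k
  define Q where "Q k = (\<Sum>s=1..k. (\<eta> s)\<^sup>2)" for k
  have Q0: "0 \<le> Q k" for k unfolding Q_def by (simp add: sum_nonneg)
  have P0: "0 \<le> P k" if "k \<le> T" for k unfolding P_def using assms(11) that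
    by (intro sum_nonneg) (simp add: less_imp_le)
  have gnS: "norm (emp_grad g S' (y k)) \<le> L" "norm (emp_grad g S (x k)) \<le> L" for k
    using SS(3,4) assms(9) xX yX setS
    by (auto intro!: emp_grad_norm assms(8) dest!: nth_mem)
  have bound: "k \<le> T - 1 \<Longrightarrow> norm (x k - y k) \<le> (4 * L / real n) * P k + 2 * L * sqrt (Q k)" for k
  proof (induction k)
    case 0
    then show ?case unfolding x_def y_def P_def Q_def by simp
  next
    case (Suc k)
    define e where "e = \<eta> (Suc k)"
    have e0: "0 \<le> e" unfolding e_def using assms(11)[of "Suc k"] Suc.prems by (simp add: less_imp_le)
    have IH: "norm (x k - y k) \<le> (4 * L / real n) * P k + 2 * L * sqrt (Q k)" using Suc by simp
    define V where "V = emp_grad g S (x k) - emp_grad g S' (y k)"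
    define d where "d = x k - y k"
    have nV: "norm V \<le> 2 * L" unfolding V_def using gnS[of k] norm_triangle_ineq4 by (smt (verit))
    have iV: "- (2 * L / real n) * norm d \<le> inner d V"
      unfolding d_def V_def
      by (rule inner_bound[OF assms(7) assms(8) L0 xX yX SS assms(9)])
    have "norm (x (Suc k) - y (Suc k)) \<le> norm ((x k - e *\<^sub>R emp_grad g S (x k)) - (y k - e *\<^sub>R emp_grad g S' (y k)))"
      using closest_point_lipschitz[OF assms(2) clX XnE] unfolding x_def y_def e_def dist_norm by simp
    also have "(x k - e *\<^sub>R emp_grad g S (x k)) - (y k - e *\<^sub>R emp_grad g S' (y k)) = d - e *\<^sub>R V"
      unfolding d_def V_def by (simp add: algebra_simps)
    finally have n1: "norm (x (Suc k) - y (Suc k)) \<le> norm (d - e *\<^sub>R V)" .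
    have "norm (d - e *\<^sub>R V) ^ 2 = norm d ^ 2 - 2 * e * inner d V + e ^ 2 * norm V ^ 2"
      by (simp add: norm_diff_sq power_mult_distrib)
    also have "\<dots> \<le> norm d ^ 2 + (4 * L / real n) * e * norm d + 4 * L ^ 2 * e ^ 2"
    proof -
      have "- 2 * e * inner d V \<le> (4 * L / real n) * e * norm d"
        using mult_left_mono[OF iV, of "2 * e"] e0 by (simp add: algebra_simps)
      moreover have "e ^ 2 * norm V ^ 2 \<le> e ^ 2 * (2 * L) ^ 2"
        by (intro mult_left_mono power_mono nV) simp_all
      moreover have "e ^ 2 * (2 * L) ^ 2 = 4 * L ^ 2 * e ^ 2" by (simp add: power_mult_distrib)
      moreover have "(4 * L / real n) * e * norm d = 4 * L * e * norm d / real n" by simp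
      ultimately show ?thesis by linarith
    qed
    finally have sq: "norm (x (Suc k) - y (Suc k)) ^ 2 \<le> norm d ^ 2 + (4 * L / real n) * e * norm d + 4 * L ^ 2 * e ^ 2"
      using power_mono[OF n1 norm_ge_zero, of 2] by linarith
    have st: "norm (x (Suc k) - y (Suc k)) \<le> (4 * L / real n) * P k + (4 * L / real n) * e + 2 * L * sqrt (Q k + e ^ 2)"
      by (rule alg_step[OF norm_ge_zero _ e0 _ Q0 L0 norm_ge_zero _ sq])
         (use L0 P0[of k] Suc.prems IH d_def in auto)
    have "P (Suc k) = P k + e" "Q (Suc k) = Q k + e ^ 2" unfolding P_def Q_def e_def by simp_all
    then show ?case using st by (simp add: distrib_left)
  qed
  show "norm (A_GD X g \<eta> x1 T S - A_GD X g \<eta> x1 T S')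
             \<le> min (2 * R) (4 * L * ((1 / real n) * (\<Sum>t=1..T-1. \<eta> t) + sqrt (\<Sum>t=1..T-1. (\<eta> t)\<^sup>2)))"
  proof -
    define K where "K = 4 * L * ((1 / real n) * (\<Sum>t=1..T-1. \<eta> t) + sqrt (\<Sum>t=1..T-1. (\<eta> t)\<^sup>2))"
    have eta0: "\<And>t. t \<in> {1..T} \<Longrightarrow> 0 \<le> \<eta> t" using assms(11) less_imp_le by blast
    have Wpos: "0 < (\<Sum>t=1..T. \<eta> t)"
      using assms(10,11) by (intro sum_pos) auto
    have vb: "norm (x (t - 1) - y (t - 1)) \<le> K" if "t \<in> {1..T}" for t
    proof -
      have tl: "t - 1 \<le> T - 1" using that by auto
      have "P (t - 1) \<le> P (T - 1)" unfolding P_def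
        by (rule sum_mono2) (use tl eta0 in auto)
      moreover have "Q (t - 1) \<le> Q (T - 1)" unfolding Q_def
        by (rule sum_mono2) (use tl in auto)
      ultimately have "(4 * L / real n) * P (t - 1) + 2 * L * sqrt (Q (t - 1))
          \<le> (4 * L / real n) * P (T - 1) + 2 * L * sqrt (Q (T - 1))"
        using L0 by (intro add_mono mult_left_mono) auto
      also have "\<dots> \<le> K" unfolding K_def P_def[symmetric] Q_def[symmetric]
        using L0 Q0[of "T - 1"] by (simp add: algebra_simps)
      finally show ?thesis using bound[OF tl] by linarith
    qed
    have "norm (A_GD X g \<eta> x1 T S - A_GD X g \<eta> x1 T S')
        = norm ((1 / (\<Sum>t=1..T. \<eta> t)) *\<^sub>R (\<Sum>t=1..T. \<eta> t *\<^sub>R (x (t - 1) - y (t - 1))))"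
      unfolding A_GD_def x_def y_def
      by (simp add: scaleR_diff_right sum_subtractf)
    also have "\<dots> \<le> K" by (rule avg_bound[OF Wpos eta0 vb])
    finally have b1: "norm (A_GD X g \<eta> x1 T S - A_GD X g \<eta> x1 T S') \<le> K" .
    have nR: "norm (A_GD X g \<eta> x1 T S0) \<le> R" if "\<forall>k. gd_seq X g S0 \<eta> x1 k \<in> X" for S0
      unfolding A_GD_def
      by (rule avg_bound[OF Wpos eta0]) (use that assms(3) in auto)
    have "norm (A_GD X g \<eta> x1 T S - A_GD X g \<eta> x1 T S')
        \<le> norm (A_GD X g \<eta> x1 T S) + norm (A_GD X g \<eta> x1 T S')" by (rule norm_triangle_ineq4)
    also have "\<dots> \<le> 2 * R" using nR xX yX unfolding x_def y_def by (smt (verit))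
    finally show ?thesis using b1 unfolding K_def by simp
  qed
qed

end
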